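(* Let $p$ be a prime and $(\Gamma,\theta)$ an oriented profinite group. Suppose that for every open subgroup $U\le\Gamma$ and every natural number $n$ the natural map $H^1(U,\mathbb{Z}_p(1)/p^n)\to H^1(U,\mathbb{Z}_p(1)/p)$ is surjective. Then the same surjectivity holds for every closed subgroup $H\le\Gamma$ and every $n$, i.e. $(\Gamma,\theta)$ is cyclotomic.
   Context: An orientation is a continuous homomorphism $\theta:\Gamma\to\mathbb{Z}_p^\times$ with image in $1+p\mathbb{Z}_p$; $\mathbb{Z}_p(1)$ is $\mathbb{Z}_p$ with action $g.x=\theta(g)x$ and $\mathbb{Z}_p(1)/p^m=\mathbb{Z}_p(1)/p^m\mathbb{Z}_p(1)$. Cohomology is continuous. $(\Gamma,\theta)$ is cyclotomic if for every closed subgroup $H$ and every $m$ the map $H^1(H,\mathbb{Z}_p(1)/p^m)\to H^1(H,\mathbb{Z}_p(1)/p)$ is surjective. *)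

theory Defs
  imports "HOL-Analysis.Analysis" "HOL-Algebra.Group"
begin

definition topological_group :: "('a, 'b) monoid_scheme \<Rightarrow> 'a topology \<Rightarrow> bool" where
  "topological_group G T \<longleftrightarrow> group G \<and> topspace T = carrier G \<and>
     continuous_map (prod_topology T T) T (\<lambda>(x, y). x \<otimes>\<^bsub>G\<^esub> y) \<and>
     continuous_map T T (\<lambda>x. inv\<^bsub>G\<^esub> x)"

definition profinite_group :: "('a, 'b) monoid_scheme \<Rightarrow> 'a topology \<Rightarrow> bool" where
  "profinite_group G T \<longleftrightarrow> topological_group G T \<and> compact_space T \<and> Hausdorff_space T \<and>
     (\<forall>x \<in> topspace T. connected_component_of_set T x = {x})"

text \<open>An element of Z_p = lim Z/p^m is represented by its compatible sequence of residues
  x m \<in> {0..<p^m}.\<close>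
definition padic :: "int \<Rightarrow> (nat \<Rightarrow> int) \<Rightarrow> bool" where
  "padic p x \<longleftrightarrow> (\<forall>m. 0 \<le> x m \<and> x m < p ^ m \<and> x (Suc m) mod p ^ m = x m)"

definition padic_mult :: "int \<Rightarrow> (nat \<Rightarrow> int) \<Rightarrow> (nat \<Rightarrow> int) \<Rightarrow> (nat \<Rightarrow> int)" where
  "padic_mult p x y = (\<lambda>m. (x m * y m) mod p ^ m)"

definition padic_one :: "int \<Rightarrow> nat \<Rightarrow> int" where
  "padic_one p = (\<lambda>m. 1 mod p ^ m)"

text \<open>Continuity w.r.t. the p-adic (inverse limit) topology means: every reduction
  g \<mapsto> theta g mod p^m is continuous into the discrete space Z/p^m.\<close>
definition orientation ::
  "int \<Rightarrow> ('a, 'b) monoid_scheme \<Rightarrow> 'a topology \<Rightarrow> ('a \<Rightarrow> nat \<Rightarrow> int) \<Rightarrow> bool" where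
  "orientation p G T \<theta> \<longleftrightarrow>
     (\<forall>g \<in> carrier G. padic p (\<theta> g) \<and> \<theta> g 1 = 1 mod p) \<and>
     (\<forall>g \<in> carrier G. \<forall>h \<in> carrier G. \<theta> (g \<otimes>\<^bsub>G\<^esub> h) = padic_mult p (\<theta> g) (\<theta> h)) \<and>
     (\<forall>m. continuous_map T (discrete_topology UNIV) (\<lambda>g. \<theta> g m))"

text \<open>Z_p(1)/p^m is {0..<p^m} (i.e. Z/p^m) with action g.x = theta(g) x mod p^m.
  Continuous 1-cocycles (crossed homomorphisms) H \<rightarrow> Z_p(1)/p^m, H a closed subgroup
  with the subspace topology; the coefficient module is finite, hence discrete.\<close>
definition Z1 ::
  "int \<Rightarrow> ('a, 'b) monoid_scheme \<Rightarrow> 'a topology \<Rightarrow> ('a \<Rightarrow> nat \<Rightarrow> int) \<Rightarrow> 'a set \<Rightarrow> nat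
    \<Rightarrow> ('a \<Rightarrow> int) set" where
  "Z1 p G T \<theta> H m = {c. c \<in> extensional H \<and> (\<forall>h \<in> H. 0 \<le> c h \<and> c h < p ^ m) \<and>
      (\<forall>g \<in> H. \<forall>h \<in> H. c (g \<otimes>\<^bsub>G\<^esub> h) = (c g + \<theta> g m * c h) mod p ^ m) \<and>
      continuous_map (subtopology T H) (discrete_topology UNIV) c}"

definition cohomologous ::
  "int \<Rightarrow> ('a, 'b) monoid_scheme \<Rightarrow> 'a topology \<Rightarrow> ('a \<Rightarrow> nat \<Rightarrow> int) \<Rightarrow> 'a set \<Rightarrow> nat
    \<Rightarrow> (('a \<Rightarrow> int) \<times> ('a \<Rightarrow> int)) set" where
  "cohomologous p G T \<theta> H m = {(c, d). c \<in> Z1 p G T \<theta> H m \<and> d \<in> Z1 p G T \<theta> H m \<and>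
      (\<exists>a. 0 \<le> a \<and> a < p ^ m \<and> (\<forall>h \<in> H. c h = (d h + \<theta> h m * a - a) mod p ^ m))}"

definition H1 ::
  "int \<Rightarrow> ('a, 'b) monoid_scheme \<Rightarrow> 'a topology \<Rightarrow> ('a \<Rightarrow> nat \<Rightarrow> int) \<Rightarrow> 'a set \<Rightarrow> nat
    \<Rightarrow> ('a \<Rightarrow> int) set set" where
  "H1 p G T \<theta> H m = Z1 p G T \<theta> H m // cohomologous p G T \<theta> H m"

definition reduce_cocycle :: "int \<Rightarrow> 'a set \<Rightarrow> ('a \<Rightarrow> int) \<Rightarrow> ('a \<Rightarrow> int)" where
  "reduce_cocycle p H c = restrict (\<lambda>h. c h mod p) H"

definition H1_reduction ::
  "int \<Rightarrow> ('a, 'b) monoid_scheme \<Rightarrow> 'a topology \<Rightarrow> ('a \<Rightarrow> nat \<Rightarrow> int) \<Rightarrow> 'a set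
    \<Rightarrow> ('a \<Rightarrow> int) set \<Rightarrow> ('a \<Rightarrow> int) set" where
  "H1_reduction p G T \<theta> H C =
     (\<Union>c \<in> C. cohomologous p G T \<theta> H 1 `` {reduce_cocycle p H c})"

definition H1_reduction_surjective ::
  "int \<Rightarrow> ('a, 'b) monoid_scheme \<Rightarrow> 'a topology \<Rightarrow> ('a \<Rightarrow> nat \<Rightarrow> int) \<Rightarrow> 'a set \<Rightarrow> nat \<Rightarrow> bool" where
  "H1_reduction_surjective p G T \<theta> H n \<longleftrightarrow>
     H1_reduction p G T \<theta> H ` H1 p G T \<theta> H n = H1 p G T \<theta> H 1"

definition cyclotomic ::
  "int \<Rightarrow> ('a, 'b) monoid_scheme \<Rightarrow> 'a topology \<Rightarrow> ('a \<Rightarrow> nat \<Rightarrow> int) \<Rightarrow> bool" where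
  "cyclotomic p G T \<theta> \<longleftrightarrow>
     (\<forall>H n. subgroup H G \<and> closedin T H \<and> n \<ge> 1 \<longrightarrow> H1_reduction_surjective p G T \<theta> H n)"

end

theory Submission imports Defs begin

lemma tg_group: "topological_group G T \<Longrightarrow> group G"
  by (simp add: topological_group_def)

lemma tg_top: "topological_group G T \<Longrightarrow> topspace T = carrier G"
  by (simp add: topological_group_def)

lemma tg_lmult:
  fixes G :: "('a, 'b) monoid_scheme" (structure)
  assumes "topological_group G T" "a \<in> carrier G"
  shows "continuous_map T T (\<lambda>x. a \<otimes>\<^bsub>G\<^esub> x)"
proof -
  have m: "continuous_map (prod_topology T T) T (\<lambda>(x, y). x \<otimes>\<^bsub>G\<^esub> y)"
    using assms by (simp add: topological_group_def)
  have "continuous_map T (prod_topology T T) (\<lambda>x. (a, x))"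
    using assms by (intro continuous_map_pairedI) (simp_all add: tg_top)
  from continuous_map_compose[OF this m] show ?thesis by (simp add: o_def)
qed

lemma tg_lmult_open:
  fixes G :: "('a, 'b) monoid_scheme" (structure)
  assumes "topological_group G T" "a \<in> carrier G" "openin T S"
  shows "openin T {x \<in> carrier G. a \<otimes>\<^bsub>G\<^esub> x \<in> S}"
  using openin_continuous_map_preimage[OF tg_lmult[OF assms(1,2)] assms(3)] assms(1)
  by (simp add: tg_top)

lemma tg_conj:
  fixes G :: "('a, 'b) monoid_scheme" (structure)
  assumes "topological_group G T"
  shows "continuous_map (prod_topology T T) T (\<lambda>(g, x). g \<otimes>\<^bsub>G\<^esub> x \<otimes>\<^bsub>G\<^esub> inv\<^bsub>G\<^esub> g)"
proof -
  have m: "continuous_map (prod_topology T T) T (\<lambda>(x, y). x \<otimes>\<^bsub>G\<^esub> y)"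
   and i: "continuous_map T T (\<lambda>x. inv\<^bsub>G\<^esub> x)"
    using assms by (auto simp: topological_group_def)
  have f: "continuous_map (prod_topology T T) T fst" "continuous_map (prod_topology T T) T snd"
    by (auto simp: continuous_map_fst continuous_map_snd)
  have "continuous_map (prod_topology T T) T (\<lambda>z. fst z \<otimes>\<^bsub>G\<^esub> snd z)"
    using m by (simp add: case_prod_unfold)
  moreover have "continuous_map (prod_topology T T) T (\<lambda>z. inv\<^bsub>G\<^esub> (fst z))"
    using continuous_map_compose[OF f(1) i] by (simp add: o_def)
  ultimately have "continuous_map (prod_topology T T) (prod_topology T T) (\<lambda>z. (fst z \<otimes>\<^bsub>G\<^esub> snd z, inv\<^bsub>G\<^esub> (fst z)))"
    by (intro continuous_map_pairedI)
  from continuous_map_compose[OF this m]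
  have "continuous_map (prod_topology T T) T ((\<lambda>(x, y). x \<otimes>\<^bsub>G\<^esub> y) \<circ> (\<lambda>z. (fst z \<otimes>\<^bsub>G\<^esub> snd z, inv\<^bsub>G\<^esub> (fst z))))" .
  moreover have "(\<lambda>(x, y). x \<otimes>\<^bsub>G\<^esub> y) \<circ> (\<lambda>z. (fst z \<otimes>\<^bsub>G\<^esub> snd z, inv\<^bsub>G\<^esub> (fst z))) = (\<lambda>(g, x). g \<otimes>\<^bsub>G\<^esub> x \<otimes>\<^bsub>G\<^esub> inv\<^bsub>G\<^esub> g)"
    by (auto simp: fun_eq_iff)
  ultimately show ?thesis by simp
qed

lemma tg_open_subgroup:
  fixes G :: "('a, 'b) monoid_scheme" (structure)
  assumes tg: "topological_group G T" and V: "subgroup V G" and B: "openin T B" "\<one>\<^bsub>G\<^esub> \<in> B" "B \<subseteq> V"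
  shows "openin T V"
proof -
  interpret group G using tg by (rule tg_group)
  show ?thesis
  proof (subst openin_subopen, intro ballI)
    fix g assume g: "g \<in> V"
    hence gc: "g \<in> carrier G" using V subgroup.subset by blast
    show "\<exists>S. openin T S \<and> g \<in> S \<and> S \<subseteq> V"
    proof (intro exI conjI)
      show "openin T {x \<in> carrier G. inv g \<otimes> x \<in> B}"
        using tg_lmult_open[OF tg _ B(1)] gc by simp
      show "g \<in> {x \<in> carrier G. inv g \<otimes> x \<in> B}" using gc B(2) l_inv[OF gc] by (metis (mono_tags, lifting) mem_Collect_eq)
      show "{x \<in> carrier G. inv g \<otimes> x \<in> B} \<subseteq> V"
      proof
        fix x assume x: "x \<in> {x \<in> carrier G. inv g \<otimes> x \<in> B}"
        hence "g \<otimes> (inv g \<otimes> x) \<in> V" using x B(3) by (intro subgroup.m_closed[OF V g]) blast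
        moreover have "g \<otimes> (inv g \<otimes> x) = x" using x gc by (simp add: m_assoc[symmetric])
        ultimately show "x \<in> V" by simp
      qed
    qed
  qed
qed


lemma (in group) gcancel1: "x \<in> carrier G \<Longrightarrow> y \<in> carrier G \<Longrightarrow> x \<otimes> (inv x \<otimes> y) = y"
  by (simp add: m_assoc[symmetric])
lemma (in group) gcancel2: "x \<in> carrier G \<Longrightarrow> y \<in> carrier G \<Longrightarrow> inv x \<otimes> (x \<otimes> y) = y"
  by (simp add: m_assoc[symmetric])

lemma pf_clopen_nbhd:
  fixes G :: "('a, 'b) monoid_scheme" (structure)
  assumes pf: "profinite_group G T" and W: "openin T W" "\<one> \<in> W"
  shows "\<exists>C. openin T C \<and> closedin T C \<and> \<one> \<in> C \<and> C \<subseteq> W"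
proof -
  have tg: "topological_group G T" and cs: "compact_space T" and hs: "Hausdorff_space T"
    and cc: "\<And>x. x \<in> topspace T \<Longrightarrow> connected_component_of_set T x = {x}"
    using pf by (auto simp: profinite_group_def)
  have one: "\<one> \<in> topspace T" using W openin_subset by blast
  have c1: "closedin T {\<one>}"
    using closedin_t1_singleton[OF Hausdorff_imp_t1_space[OF hs] one] .
  have c2: "closedin T (topspace T - W)" using W(1) by blast
  have "separated_between T {\<one>} (topspace T - W)"
  proof (rule cut_wire_fence_theorem[OF cs hs c1 c2])
    fix C assume C: "connectedin T C"
    show "disjnt C {\<one>} \<or> disjnt C (topspace T - W)"
    proof (cases "\<one> \<in> C")
      case True
      have "C \<subseteq> connected_component_of_set T \<one>"
        by (rule connected_component_of_maximal[OF C True])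
      hence "C \<subseteq> {\<one>}" using cc[OF one] by simp
      thus ?thesis using W(2) by (auto simp: disjnt_def)
    next
      case False thus ?thesis by (simp add: disjnt_def)
    qed
  qed
  then obtain U V where UV: "openin T U" "openin T V" "U \<union> V = topspace T" "disjnt U V"
     "{\<one>} \<subseteq> U" "topspace T - W \<subseteq> V"
    unfolding separated_between_def by blast
  have "U = topspace T - V" using UV(3,4) by (auto simp: disjnt_def)
  hence "closedin T U" using UV(2) by auto
  moreover have "U \<subseteq> W" using UV(1,4,6) openin_subset by (fastforce simp: disjnt_def)
  ultimately show ?thesis using UV by blast
qed

lemma pf_open_subgroup_nbhd:
  fixes G :: "('a, 'b) monoid_scheme" (structure)
  assumes pf: "profinite_group G T" and W: "openin T W" "\<one> \<in> W"
  shows "\<exists>V. subgroup V G \<and> openin T V \<and> V \<subseteq> W"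
proof -
  have tg: "topological_group G T" and cs: "compact_space T"
    using pf by (auto simp: profinite_group_def)
  interpret group G using tg by (rule tg_group)
  have top: "topspace T = carrier G" using tg by (rule tg_top)
  obtain C where C: "openin T C" "closedin T C" "\<one> \<in> C" "C \<subseteq> W"
    using pf_clopen_nbhd[OF pf W] by blast
  have Cc: "C \<subseteq> carrier G" using C(1) openin_subset top by blast
  have m: "continuous_map (prod_topology T T) T (\<lambda>(x, y). x \<otimes> y)"
   and i: "continuous_map T T (\<lambda>x. inv x)"
    using tg by (auto simp: topological_group_def)
  define P where "P = {z \<in> topspace (prod_topology T T). (\<lambda>(x, y). x \<otimes> y) z \<in> C}"
  have Po: "openin (prod_topology T T) P"
    unfolding P_def by (rule openin_continuous_map_preimage[OF m C(1)])
  have CP: "C \<times> {\<one>} \<subseteq> P" using Cc top by (auto simp: P_def)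
  have one: "\<one> \<in> topspace T" using top by simp
  obtain U B where UB: "openin T U" "openin T B" "C \<subseteq> U" "\<one> \<in> B" "U \<times> B \<subseteq> P"
    using tube_lemma_left[OF Po closedin_compact_space[OF cs C(2)] one CP] by blast
  have CB: "c \<otimes> b \<in> C" if "c \<in> C" "b \<in> B" for c b
  proof -
    have "(c, b) \<in> U \<times> B" using that UB(3) by blast
    hence "(c, b) \<in> P" using UB(5) by blast
    thus ?thesis by (simp add: P_def)
  qed
  define S where "S = B \<inter> {x \<in> topspace T. inv x \<in> B}"
  have So: "openin T S" unfolding S_def
    by (intro openin_Int UB(2) openin_continuous_map_preimage[OF i UB(2)])
  have S1: "\<one> \<in> S" using UB(4) top by (simp add: S_def)
  define V where "V = {g \<in> carrier G. \<forall>c\<in>C. c \<otimes> g \<in> C \<and> c \<otimes> inv g \<in> C}"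
  have Vsub: "subgroup V G"
  proof (rule subgroupI)
    show "V \<subseteq> carrier G" by (auto simp: V_def)
    show "V \<noteq> {}" using Cc by (auto simp: V_def intro!: exI[of _ \<one>])
    show "inv a \<in> V" if "a \<in> V" for a using that by (auto simp: V_def)
    show "a \<otimes> b \<in> V" if "a \<in> V" "b \<in> V" for a b
    proof -
      have ab: "a \<in> carrier G" "b \<in> carrier G" using that by (auto simp: V_def)
      { fix c assume c: "c \<in> C"
        hence cc: "c \<in> carrier G" using Cc by blast
        have "c \<otimes> a \<in> C" using that c by (auto simp: V_def)
        hence "(c \<otimes> a) \<otimes> b \<in> C" using that(2) by (auto simp: V_def)
        hence 1: "c \<otimes> (a \<otimes> b) \<in> C" using ab cc by (simp add: m_assoc)
        have "c \<otimes> inv b \<in> C" using that c by (auto simp: V_def)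
        hence "(c \<otimes> inv b) \<otimes> inv a \<in> C" using that(1) by (auto simp: V_def)
        hence 2: "c \<otimes> inv (a \<otimes> b) \<in> C" using ab cc by (simp add: m_assoc inv_mult_group)
        note 1 2 }
      thus ?thesis using ab by (auto simp: V_def)
    qed
  qed
  have SV: "S \<subseteq> V"
  proof
    fix s assume s: "s \<in> S"
    hence "s \<in> B" "inv s \<in> B" "s \<in> carrier G" using top by (auto simp: S_def)
    thus "s \<in> V" using CB by (auto simp: V_def)
  qed
  have VC: "V \<subseteq> C"
  proof
    fix g assume "g \<in> V"
    hence "\<one> \<otimes> g \<in> C" "g \<in> carrier G" using C(3) by (auto simp: V_def)
    thus "g \<in> C" by simp
  qed
  have "openin T V" by (rule tg_open_subgroup[OF tg Vsub So S1 SV])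
  thus ?thesis using Vsub VC C(4) by blast
qed

lemma pf_normal_core:
  fixes G :: "('a, 'b) monoid_scheme" (structure)
  assumes pf: "profinite_group G T" and V: "subgroup V G" "openin T V"
  shows "\<exists>N. subgroup N G \<and> openin T N \<and> N \<subseteq> V \<and>
     (\<forall>g\<in>carrier G. \<forall>n\<in>N. g \<otimes> n \<otimes> inv g \<in> N)"
proof -
  have tg: "topological_group G T" and cs: "compact_space T"
    using pf by (auto simp: profinite_group_def)
  interpret group G using tg by (rule tg_group)
  have top: "topspace T = carrier G" using tg by (rule tg_top)
  have Vc: "V \<subseteq> carrier G" using V(1) subgroup.subset by blast
  have one: "\<one> \<in> V" using V(1) subgroup.one_closed by blast
  define Q where "Q = {z \<in> topspace (prod_topology T T). (\<lambda>(g, x). g \<otimes> x \<otimes> inv g) z \<in> V}"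
  have Qo: "openin (prod_topology T T) Q"
    unfolding Q_def by (rule openin_continuous_map_preimage[OF tg_conj[OF tg] V(2)])
  have TQ: "topspace T \<times> {\<one>} \<subseteq> Q" using top one by (auto simp: Q_def)
  have onet: "\<one> \<in> topspace T" using top by simp
  obtain U B where UB: "openin T U" "openin T B" "topspace T \<subseteq> U" "\<one> \<in> B" "U \<times> B \<subseteq> Q"
    using tube_lemma_left[OF Qo cs[unfolded compact_space_def] onet TQ] by blast
  have Bc: "B \<subseteq> carrier G" using UB(2) openin_subset top by blast
  have GB: "g \<otimes> b \<otimes> inv g \<in> V" if "g \<in> carrier G" "b \<in> B" for g b
  proof -
    have "(g, b) \<in> U \<times> B" using that UB(3) top by blast
    hence "(g, b) \<in> Q" using UB(5) by blast
    thus ?thesis by (simp add: Q_def)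
  qed
  define N where "N = {x \<in> carrier G. \<forall>g\<in>carrier G. g \<otimes> x \<otimes> inv g \<in> V}"
  have conjmult: "g \<otimes> (x \<otimes> y) \<otimes> inv g = (g \<otimes> x \<otimes> inv g) \<otimes> (g \<otimes> y \<otimes> inv g)"
    if "g \<in> carrier G" "x \<in> carrier G" "y \<in> carrier G" for g x y
    using that by (simp add: m_assoc gcancel2)
  have conjinv: "g \<otimes> inv x \<otimes> inv g = inv (g \<otimes> x \<otimes> inv g)"
    if "g \<in> carrier G" "x \<in> carrier G" for g x
    using that by (simp add: m_assoc inv_mult_group)
  have conjconj: "g \<otimes> (h \<otimes> x \<otimes> inv h) \<otimes> inv g = (g \<otimes> h) \<otimes> x \<otimes> inv (g \<otimes> h)"
    if "g \<in> carrier G" "h \<in> carrier G" "x \<in> carrier G" for g h x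
    using that by (simp add: m_assoc inv_mult_group)
  have Nsub: "subgroup N G"
  proof (rule subgroupI)
    show "N \<subseteq> carrier G" by (auto simp: N_def)
    show "N \<noteq> {}" using one by (auto simp: N_def intro!: exI[of _ \<one>])
    show "inv a \<in> N" if "a \<in> N" for a
      using that conjinv V(1) subgroup.m_inv_closed by (fastforce simp: N_def)
    show "a \<otimes> b \<in> N" if "a \<in> N" "b \<in> N" for a b
      using that conjmult V(1) subgroup.m_closed by (fastforce simp: N_def)
  qed
  have NV: "N \<subseteq> V"
  proof
    fix x assume "x \<in> N"
    hence "\<forall>g\<in>carrier G. g \<otimes> x \<otimes> inv g \<in> V" "x \<in> carrier G" by (auto simp: N_def)
    hence "\<one> \<otimes> x \<otimes> inv \<one> \<in> V" "x \<in> carrier G" by blast+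
    thus "x \<in> V" by simp
  qed
  have BN: "B \<subseteq> N" using Bc GB by (auto simp: N_def)
  have "openin T N" by (rule tg_open_subgroup[OF tg Nsub UB(2,4) BN])
  moreover have "\<forall>g\<in>carrier G. \<forall>n\<in>N. g \<otimes> n \<otimes> inv g \<in> N"
    using conjconj by (auto simp: N_def)
  ultimately show ?thesis using Nsub NV by blast
qed


lemma mod_mult_left_cong_int: "(a + t * b) mod p = (a + (t mod p) * b) mod (p::int)"
proof -
  have "(a + t * b) mod p = (a + (t * b) mod p) mod p" by (rule mod_add_right_eq[symmetric])
  also have "(t * b) mod p = ((t mod p) * b) mod p" by (rule mod_mult_left_eq[symmetric])
  also have "(a + ((t mod p) * b) mod p) mod p = (a + (t mod p) * b) mod p" by (rule mod_add_right_eq)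
  finally show ?thesis .
qed

lemma prime_gt1: "prime (p::int) \<Longrightarrow> p > 1"
  using prime_gt_1_int by blast

lemma padic_mod1:
  assumes "padic p x" "p > 1"
  shows "x (Suc m) mod p = x 1"
proof (induction m)
  case 0
  have "0 \<le> x 1" "x 1 < p" using assms(1) unfolding padic_def by (metis power_one_right)+
  thus ?case by simp
next
  case (Suc m)
  have "p dvd p ^ Suc m" by simp
  hence "x (Suc (Suc m)) mod p = (x (Suc (Suc m)) mod p ^ Suc m) mod p"
    by (simp add: mod_mod_cancel)
  also have "\<dots> = x (Suc m) mod p" using assms(1) unfolding padic_def by metis
  finally show ?case using Suc by simp
qed

lemma or_theta1:
  fixes G :: "('a, 'b) monoid_scheme" (structure)
  assumes "prime p" "orientation p G T \<theta>" "g \<in> carrier G"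
  shows "\<theta> g 1 = 1"
  using assms prime_gt1[OF assms(1)] unfolding orientation_def by auto

lemma or_thetan:
  fixes G :: "('a, 'b) monoid_scheme" (structure)
  assumes "prime p" "orientation p G T \<theta>" "g \<in> carrier G" "n \<ge> 1"
  shows "\<theta> g n mod p = 1"
proof -
  have pd: "padic p (\<theta> g)" using assms unfolding orientation_def by blast
  obtain m where m: "n = Suc m" using assms(4) by (cases n) auto
  show ?thesis using padic_mod1[OF pd prime_gt1[OF assms(1)], of m] or_theta1[OF assms(1-3)] m by simp
qed

lemma or_thetan_dvd:
  fixes G :: "('a, 'b) monoid_scheme" (structure)
  assumes "prime p" "orientation p G T \<theta>" "g \<in> carrier G" "n \<ge> 1"
  shows "(y + \<theta> g n * a - a) mod p = y mod p"
proof -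
  have "(\<theta> g n - 1) mod p = 0" using or_thetan[OF assms]
    by (metis cancel_comm_monoid_add_class.diff_cancel mod_diff_left_eq mod_self mod_mod_trivial)
  hence "p dvd (\<theta> g n - 1) * a" by auto
  hence "(y + (\<theta> g n - 1) * a) mod p = y mod p"
    by (simp add: mod_add_right_eq[symmetric])
  thus ?thesis by (simp add: algebra_simps)
qed

lemma Z1_ext: "c \<in> Z1 p G T \<theta> H m \<Longrightarrow> c \<in> extensional H"
  by (simp add: Z1_def)

lemma Z1_range: "c \<in> Z1 p G T \<theta> H m \<Longrightarrow> h \<in> H \<Longrightarrow> 0 \<le> c h \<and> c h < p ^ m"
  by (simp add: Z1_def)

lemma Z1_cocycle: "c \<in> Z1 p G T \<theta> H m \<Longrightarrow> g \<in> H \<Longrightarrow> h \<in> H \<Longrightarrow>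
   c (g \<otimes>\<^bsub>G\<^esub> h) = (c g + \<theta> g m * c h) mod p ^ m"
  by (simp add: Z1_def)

lemma Z1_cont: "c \<in> Z1 p G T \<theta> H m \<Longrightarrow> continuous_map (subtopology T H) (discrete_topology UNIV) c"
  by (simp add: Z1_def)

lemma cont_discrete_comp:
  "continuous_map X (discrete_topology UNIV) c \<Longrightarrow> continuous_map X (discrete_topology UNIV) (\<lambda>x. f (c x))"
proof -
  assume a: "continuous_map X (discrete_topology UNIV) c"
  have "continuous_map (discrete_topology UNIV) (discrete_topology UNIV) f" by simp
  from continuous_map_compose[OF a this] show ?thesis by (simp add: o_def)
qed

lemma reduce_Z1:
  fixes G :: "('a, 'b) monoid_scheme" (structure)
  assumes p: "prime p" and or: "orientation p G T \<theta>" and H: "subgroup H G" and n: "n \<ge> 1"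
    and x: "x \<in> Z1 p G T \<theta> H n"
  shows "reduce_cocycle p H x \<in> Z1 p G T \<theta> H 1"
proof -
  have p1: "p > 1" using prime_gt1[OF p] .
  have Hc: "H \<subseteq> carrier G" using H subgroup.subset by blast
  have "p dvd p ^ n" using n by simp
  have cocy: "x (g \<otimes> h) mod p = (x g mod p + \<theta> g 1 * (x h mod p)) mod p" if "g \<in> H" "h \<in> H" for g h
  proof -
    have gc: "g \<in> carrier G" using that Hc by blast
    have "x (g \<otimes> h) mod p = ((x g + \<theta> g n * x h) mod p ^ n) mod p"
      using Z1_cocycle[OF x that] by simp
    also have "\<dots> = (x g + \<theta> g n * x h) mod p" using \<open>p dvd p ^ n\<close> by (simp add: mod_mod_cancel)
    also have "\<dots> = (x g + (\<theta> g n mod p) * x h) mod p" by (rule mod_mult_left_cong_int)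
    also have "\<dots> = (x g + x h) mod p" using or_thetan[OF p or gc n] by simp
    also have "\<dots> = (x g mod p + \<theta> g 1 * (x h mod p)) mod p" using or_theta1[OF p or gc] by (simp add: mod_add_eq)
    finally show ?thesis .
  qed
  have cont: "continuous_map (subtopology T H) (discrete_topology UNIV) (reduce_cocycle p H x)"
  proof (rule continuous_map_eq[OF cont_discrete_comp[OF Z1_cont[OF x], of "\<lambda>v. v mod p"]])
    fix h assume "h \<in> topspace (subtopology T H)"
    thus "x h mod p = reduce_cocycle p H x h" by (simp add: reduce_cocycle_def)
  qed
  have A1: "reduce_cocycle p H x \<in> extensional H" by (simp add: reduce_cocycle_def)
  have A2: "\<forall>h\<in>H. 0 \<le> reduce_cocycle p H x h \<and> reduce_cocycle p H x h < p ^ 1"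
    using p1 by (simp add: reduce_cocycle_def)
  have A3: "\<forall>g\<in>H. \<forall>h\<in>H. reduce_cocycle p H x (g \<otimes> h) = (reduce_cocycle p H x g + \<theta> g 1 * reduce_cocycle p H x h) mod p ^ 1"
  proof (intro ballI)
    fix g h assume gh: "g \<in> H" "h \<in> H"
    have gh2: "g \<otimes> h \<in> H" using subgroup.m_closed[OF H gh] .
    have "reduce_cocycle p H x (g \<otimes> h) = x (g \<otimes> h) mod p"
      using gh2 by (simp add: reduce_cocycle_def)
    also have "\<dots> = (x g mod p + \<theta> g 1 * (x h mod p)) mod p" by (rule cocy[OF gh])
    also have "\<dots> = (reduce_cocycle p H x g + \<theta> g 1 * reduce_cocycle p H x h) mod p ^ 1"
      using gh by (simp add: reduce_cocycle_def)
    finally show "reduce_cocycle p H x (g \<otimes> h) = (reduce_cocycle p H x g + \<theta> g 1 * reduce_cocycle p H x h) mod p ^ 1" .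
  qed
  show ?thesis unfolding Z1_def mem_Collect_eq
    by (intro conjI A1 A2 A3 cont)
qed

lemma coh1_iff:
  fixes G :: "('a, 'b) monoid_scheme" (structure)
  assumes p: "prime p" and or: "orientation p G T \<theta>" and Hc: "H \<subseteq> carrier G"
  shows "(c, d) \<in> cohomologous p G T \<theta> H 1 \<longleftrightarrow> c \<in> Z1 p G T \<theta> H 1 \<and> d = c"
proof
  assume a: "(c, d) \<in> cohomologous p G T \<theta> H 1"
  then obtain a where c: "c \<in> Z1 p G T \<theta> H 1" "d \<in> Z1 p G T \<theta> H 1"
     and eq: "\<forall>h \<in> H. c h = (d h + \<theta> h 1 * a - a) mod p ^ 1"
    unfolding cohomologous_def by blast
  have "c h = d h" if "h \<in> H" for h
  proof -
    have "\<theta> h 1 = 1" using or_theta1[OF p or] that Hc by blast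
    hence "c h = d h mod p" using eq that by simp
    thus ?thesis using Z1_range[OF c(2) that] by simp
  qed
  hence "d = c" using Z1_ext[OF c(1)] Z1_ext[OF c(2)] by (metis extensionalityI)
  thus "c \<in> Z1 p G T \<theta> H 1 \<and> d = c" using c by blast
next
  assume a: "c \<in> Z1 p G T \<theta> H 1 \<and> d = c"
  have "\<forall>h \<in> H. c h = (c h + \<theta> h 1 * 0 - 0) mod p ^ 1"
    using Z1_range[OF a[THEN conjunct1]] by simp
  moreover have "(0::int) < p ^ 1" using prime_gt1[OF p] by simp
  ultimately show "(c, d) \<in> cohomologous p G T \<theta> H 1" using a unfolding cohomologous_def
    by (intro CollectI) (simp, intro exI[of _ 0], simp)
qed

lemma coh1_class:
  fixes G :: "('a, 'b) monoid_scheme" (structure)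
  assumes p: "prime p" and or: "orientation p G T \<theta>" and Hc: "H \<subseteq> carrier G"
    and c: "c \<in> Z1 p G T \<theta> H 1"
  shows "cohomologous p G T \<theta> H 1 `` {c} = {c}"
  using coh1_iff[OF p or Hc] c by auto

lemma H1_1:
  fixes G :: "('a, 'b) monoid_scheme" (structure)
  assumes p: "prime p" and or: "orientation p G T \<theta>" and Hc: "H \<subseteq> carrier G"
  shows "H1 p G T \<theta> H 1 = (\<lambda>c. {c}) ` Z1 p G T \<theta> H 1"
  unfolding H1_def quotient_def using coh1_class[OF p or Hc] by auto

lemma H1_red_class:
  fixes G :: "('a, 'b) monoid_scheme" (structure)
  assumes p: "prime p" and or: "orientation p G T \<theta>" and H: "subgroup H G" and n: "n \<ge> 1"
    and x: "x \<in> Z1 p G T \<theta> H n"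
  shows "H1_reduction p G T \<theta> H (cohomologous p G T \<theta> H n `` {x}) = {reduce_cocycle p H x}"
proof -
  have Hc: "H \<subseteq> carrier G" using H subgroup.subset by blast
  have pn: "p dvd p ^ n" using n by simp
  have same: "reduce_cocycle p H e = reduce_cocycle p H x" if e: "(x, e) \<in> cohomologous p G T \<theta> H n" for e
  proof -
    obtain a where eq: "\<forall>h \<in> H. x h = (e h + \<theta> h n * a - a) mod p ^ n"
      using e unfolding cohomologous_def by blast
    have "x h mod p = e h mod p" if h: "h \<in> H" for h
    proof -
      have "x h mod p = ((e h + \<theta> h n * a - a) mod p ^ n) mod p" using eq h by simp
      also have "\<dots> = (e h + \<theta> h n * a - a) mod p" using pn by (simp add: mod_mod_cancel)
      also have "\<dots> = e h mod p" using or_thetan_dvd[OF p or _ n] h Hc by blast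
      finally show ?thesis .
    qed
    thus ?thesis unfolding reduce_cocycle_def by (intro restrict_ext) simp
  qed
  have xx: "(x, x) \<in> cohomologous p G T \<theta> H n"
  proof -
    have "\<forall>h \<in> H. x h = (x h + \<theta> h n * 0 - 0) mod p ^ n"
      using Z1_range[OF x] by simp
    moreover have "(0::int) < p ^ n" using prime_gt1[OF p] by simp
    ultimately show ?thesis using x unfolding cohomologous_def
      by (intro CollectI) (simp, intro exI[of _ 0], simp)
  qed
  have rZ: "reduce_cocycle p H x \<in> Z1 p G T \<theta> H 1" by (rule reduce_Z1[OF p or H n x])
  have "H1_reduction p G T \<theta> H (cohomologous p G T \<theta> H n `` {x})
      = (\<Union>e \<in> cohomologous p G T \<theta> H n `` {x}. cohomologous p G T \<theta> H 1 `` {reduce_cocycle p H x})"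
    unfolding H1_reduction_def using same by (intro SUP_cong) auto
  also have "\<dots> = cohomologous p G T \<theta> H 1 `` {reduce_cocycle p H x}" using xx by blast
  also have "\<dots> = {reduce_cocycle p H x}" by (rule coh1_class[OF p or Hc rZ])
  finally show ?thesis .
qed


lemma ne_from_mem: "x \<in> A \<Longrightarrow> A \<noteq> {}"
  by auto

lemma restrict_Z1:
  fixes G :: "('a, 'b) monoid_scheme" (structure)
  assumes H: "subgroup H G" and HU: "H \<subseteq> U" and x: "x \<in> Z1 p G T \<theta> U n"
  shows "restrict x H \<in> Z1 p G T \<theta> H n"
proof -
  have A1: "restrict x H \<in> extensional H" by simp
  have A2: "\<forall>h\<in>H. 0 \<le> restrict x H h \<and> restrict x H h < p ^ n"
  proof
    fix h assume h: "h \<in> H"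
    hence "h \<in> U" using HU by blast
    thus "0 \<le> restrict x H h \<and> restrict x H h < p ^ n" using Z1_range[OF x] h by simp
  qed
  have A3: "\<forall>g\<in>H. \<forall>h\<in>H. restrict x H (g \<otimes> h) = (restrict x H g + \<theta> g n * restrict x H h) mod p ^ n"
  proof (intro ballI)
    fix g h assume gh: "g \<in> H" "h \<in> H"
    have gh2: "g \<otimes> h \<in> H" using subgroup.m_closed[OF H gh] .
    have ghU: "g \<in> U" "h \<in> U" using gh HU by auto
    show "restrict x H (g \<otimes> h) = (restrict x H g + \<theta> g n * restrict x H h) mod p ^ n"
      using gh gh2 Z1_cocycle[OF x ghU] by simp
  qed
  have cont: "continuous_map (subtopology T H) (discrete_topology UNIV) (restrict x H)"
  proof (rule continuous_map_eq[OF continuous_map_from_subtopology_mono[OF Z1_cont[OF x] HU]])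
    fix h assume "h \<in> topspace (subtopology T H)"
    thus "x h = restrict x H h" by simp
  qed
  show ?thesis unfolding Z1_def mem_Collect_eq
    by (intro conjI A1 A2 A3 cont)
qed

lemma reduce_restrict:
  "H \<subseteq> U \<Longrightarrow> reduce_cocycle p H (restrict x H) = restrict (reduce_cocycle p U x) H"
  unfolding reduce_cocycle_def by (intro ext) auto

lemma extend_hom:
  fixes G :: "('a, 'b) monoid_scheme" (structure)
  assumes p: "prime p" and pf: "profinite_group G T" and or: "orientation p G T \<theta>"
    and H: "subgroup H G" and c: "c \<in> Z1 p G T \<theta> H 1"
  shows "\<exists>U c'. subgroup U G \<and> openin T U \<and> H \<subseteq> U \<and> c' \<in> Z1 p G T \<theta> U 1 \<and> restrict c' H = c"
proof -
  have tg: "topological_group G T" using pf by (simp add: profinite_group_def)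
  interpret group G using tg by (rule tg_group)
  have top: "topspace T = carrier G" using tg by (rule tg_top)
  have Hc: "H \<subseteq> carrier G" using H subgroup.subset by blast
  have H1: "\<one> \<in> H" using H subgroup.one_closed by blast
  have th1: "\<theta> g 1 = 1" if "g \<in> carrier G" for g using or_theta1[OF p or that] .
  have chom: "c (g \<otimes> h) = (c g + c h) mod p" if "g \<in> H" "h \<in> H" for g h
    using Z1_cocycle[OF c that] th1[of g] that Hc by auto
  have crange: "0 \<le> c h \<and> c h < p" if "h \<in> H" for h using Z1_range[OF c that] by simp
  have c1: "c \<one> = 0"
  proof -
    define v where "v = c \<one>"
    have v: "0 \<le> v" "v < p" using crange[OF H1] by (auto simp: v_def)
    have "v = (v + v) mod p" using chom[OF H1 H1] by (simp add: v_def)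
    hence "(v + v) mod p = v mod p" using v by simp
    hence "p dvd (v + v) - v" by (simp add: mod_eq_dvd_iff)
    hence "p dvd v" by simp
    show "c \<one> = 0"
    proof (rule ccontr)
      assume "c \<one> \<noteq> 0"
      hence "0 < v" using v by (simp add: v_def)
      hence "p \<le> v" using \<open>p dvd v\<close> by (rule zdvd_imp_le[rotated])
      thus False using v by simp
    qed
  qed
  have Kinv: "c h2 = c h1" if "h1 \<in> H" "h2 \<in> H" "c (inv h1 \<otimes> h2) = 0" for h1 h2
  proof -
    have k: "inv h1 \<otimes> h2 \<in> H" using that H by (simp add: subgroup.m_closed subgroup.m_inv_closed)
    have "h1 \<otimes> (inv h1 \<otimes> h2) = h2" using that Hc by (simp add: gcancel1 subset_iff)
    hence "c h2 = (c h1 + c (inv h1 \<otimes> h2)) mod p" using chom[OF that(1) k] by simp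
    thus ?thesis using that(3) crange[OF that(1)] by simp
  qed
  have Zc: "continuous_map (subtopology T H) (discrete_topology UNIV) c" using Z1_cont[OF c] .
  have "openin (subtopology T H) {x \<in> topspace (subtopology T H). c x \<in> {0}}"
    by (rule openin_continuous_map_preimage[OF Zc]) simp
  then obtain W where W: "openin T W" "{x \<in> topspace (subtopology T H). c x \<in> {0}} = W \<inter> H"
    unfolding openin_subtopology by blast
  have tsH: "topspace (subtopology T H) = H" using Hc top by auto
  have "\<one> \<in> {x \<in> topspace (subtopology T H). c x \<in> {0}}" using c1 H1 tsH by simp
  hence W1: "\<one> \<in> W" unfolding W(2) by simp
  have WK: "c h = 0" if "h \<in> W" "h \<in> H" for h
  proof -
    have "h \<in> {x \<in> topspace (subtopology T H). c x \<in> {0}}" unfolding W(2) using that by simp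
    thus ?thesis by simp
  qed
  obtain V where V: "subgroup V G" "openin T V" "V \<subseteq> W"
    using pf_open_subgroup_nbhd[OF pf W(1) W1] by blast
  obtain N where N: "subgroup N G" "openin T N" "N \<subseteq> V"
     and Nn: "\<And>g n. g \<in> carrier G \<Longrightarrow> n \<in> N \<Longrightarrow> g \<otimes> n \<otimes> inv g \<in> N"
    using pf_normal_core[OF pf V(1,2)] by blast
  have Nc: "N \<subseteq> carrier G" by (rule subgroup.subset[OF N(1)])
  have N1: "\<one> \<in> N" by (rule subgroup.one_closed[OF N(1)])
  have Nm: "a \<otimes> b \<in> N" if "a \<in> N" "b \<in> N" for a b using subgroup.m_closed[OF N(1) that] .
  have Ni: "inv a \<in> N" if "a \<in> N" for a using subgroup.m_inv_closed[OF N(1) that] .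
  have NHK: "c h = 0" if "h \<in> N" "h \<in> H" for h using that(1) N(3) V(3) by (intro WK[OF _ that(2)]) (meson subsetD)
  define U where "U = {x \<in> carrier G. \<exists>h\<in>H. inv h \<otimes> x \<in> N}"
  have Uintro: "x \<in> U" if "x \<in> carrier G" "h \<in> H" "inv h \<otimes> x \<in> N" for x h
    unfolding U_def using that by (intro CollectI conjI bexI)
  have Umult: "inv (h1 \<otimes> h2) \<otimes> (x \<otimes> y) \<in> N"
    if "x \<in> carrier G" "y \<in> carrier G" "h1 \<in> carrier G" "h2 \<in> carrier G"
       "inv h1 \<otimes> x \<in> N" "inv h2 \<otimes> y \<in> N" for x y h1 h2
  proof -
    have "inv (h1 \<otimes> h2) \<otimes> (x \<otimes> y) = (inv h2 \<otimes> (inv h1 \<otimes> x) \<otimes> inv (inv h2)) \<otimes> (inv h2 \<otimes> y)"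
      using that(1-4) by (simp add: m_assoc inv_mult_group gcancel1)
    moreover have "inv h2 \<otimes> (inv h1 \<otimes> x) \<otimes> inv (inv h2) \<in> N"
      using Nn[OF inv_closed[OF that(4)] that(5)] .
    ultimately show ?thesis using Nm that(6) by simp
  qed
  have Uinv: "inv (inv h) \<otimes> inv x \<in> N"
    if "x \<in> carrier G" "h \<in> carrier G" "inv h \<otimes> x \<in> N" for x h
  proof -
    have "h \<otimes> inv (inv h \<otimes> x) \<otimes> inv h = inv (inv h) \<otimes> inv x"
      using that(1,2) by (simp add: m_assoc inv_mult_group gcancel1)
    moreover have "h \<otimes> inv (inv h \<otimes> x) \<otimes> inv h \<in> N" using Nn[OF that(2) Ni[OF that(3)]] .
    ultimately show ?thesis by simp
  qed
  have Usub: "subgroup U G"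
  proof (rule subgroupI)
    show "U \<subseteq> carrier G" by (auto simp: U_def)
    have "inv \<one> \<otimes> \<one> \<in> N" using N1 by simp
    hence "\<one> \<in> U" by (rule Uintro[OF one_closed H1])
    thus "U \<noteq> {}" by (rule ne_from_mem)
    show "inv a \<in> U" if aU: "a \<in> U" for a
    proof -
      obtain h where h: "h \<in> H" "inv h \<otimes> a \<in> N" "a \<in> carrier G" using aU by (auto simp: U_def)
      have ih: "inv h \<in> H" by (rule subgroup.m_inv_closed[OF H h(1)])
      have "inv (inv h) \<otimes> inv a \<in> N" by (rule Uinv[OF h(3) subsetD[OF Hc h(1)] h(2)])
      thus ?thesis by (rule Uintro[OF inv_closed[OF h(3)] ih])
    qed
    show "a \<otimes> b \<in> U" if abU: "a \<in> U" "b \<in> U" for a b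
    proof -
      obtain h1 where h1: "h1 \<in> H" "inv h1 \<otimes> a \<in> N" "a \<in> carrier G" using abU(1) by (auto simp: U_def)
      obtain h2 where h2: "h2 \<in> H" "inv h2 \<otimes> b \<in> N" "b \<in> carrier G" using abU(2) by (auto simp: U_def)
      have h12: "h1 \<otimes> h2 \<in> H" by (rule subgroup.m_closed[OF H h1(1) h2(1)])
      moreover have "inv (h1 \<otimes> h2) \<otimes> (a \<otimes> b) \<in> N"
        by (rule Umult[OF h1(3) h2(3) subsetD[OF Hc h1(1)] subsetD[OF Hc h2(1)] h1(2) h2(2)])
      ultimately show ?thesis by (intro Uintro[OF m_closed[OF h1(3) h2(3)]])
    qed
  qed
  have HU: "H \<subseteq> U"
  proof
    fix h assume h: "h \<in> H"
    hence "h \<in> carrier G" by (rule subsetD[OF Hc])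
    hence "inv h \<otimes> h \<in> N" using N1 by simp
    thus "h \<in> U" by (rule Uintro[OF \<open>h \<in> carrier G\<close> h])
  qed
  have NU: "N \<subseteq> U"
  proof
    fix x assume x: "x \<in> N"
    hence "x \<in> carrier G" by (rule subsetD[OF Nc])
    hence "inv \<one> \<otimes> x \<in> N" using x by simp
    thus "x \<in> U" by (rule Uintro[OF \<open>x \<in> carrier G\<close> H1])
  qed
  have Uo: "openin T U" by (rule tg_open_subgroup[OF tg Usub N(2) N1 NU])
  define hsel where "hsel x = (SOME h. h \<in> H \<and> inv h \<otimes> x \<in> N)" for x
  have hsel: "hsel x \<in> H \<and> inv (hsel x) \<otimes> x \<in> N" if "x \<in> U" for x
  proof -
    have "\<exists>h. h \<in> H \<and> inv h \<otimes> x \<in> N" using that by (auto simp: U_def)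
    thus ?thesis unfolding hsel_def by (rule someI_ex)
  qed
  define c' where "c' = restrict (\<lambda>x. c (hsel x)) U"
  have key: "c' x = c h" if "x \<in> U" "h \<in> H" "inv h \<otimes> x \<in> N" for x h
  proof -
    define h0 where "h0 = hsel x"
    have h0: "h0 \<in> H" "inv h0 \<otimes> x \<in> N" using hsel[OF that(1)] by (auto simp: h0_def)
    have xc: "x \<in> carrier G" using that(1) by (auto simp: U_def)
    have h0c: "h0 \<in> carrier G" "h \<in> carrier G" using h0(1) that(2) Hc by auto
    have "(inv h0 \<otimes> x) \<otimes> inv (inv h \<otimes> x) = inv h0 \<otimes> h"
      using xc h0c by (simp add: m_assoc inv_mult_group gcancel1)
    moreover have "(inv h0 \<otimes> x) \<otimes> inv (inv h \<otimes> x) \<in> N" using Nm[OF h0(2) Ni[OF that(3)]] .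
    ultimately have inN: "inv h0 \<otimes> h \<in> N" by simp
    have inH: "inv h0 \<otimes> h \<in> H" using h0(1) that(2) H by (simp add: subgroup.m_closed subgroup.m_inv_closed)
    have "c h = c h0" using Kinv[OF h0(1) that(2) NHK[OF inN inH]] .
    thus ?thesis using that(1) by (simp add: c'_def h0_def)
  qed
  have c'H: "restrict c' H = c"
  proof (rule ext)
    fix h show "restrict c' H h = c h"
    proof (cases "h \<in> H")
      case True
      hence "h \<in> carrier G" by (rule subsetD[OF Hc])
      hence "inv h \<otimes> h \<in> N" using N1 by simp
      thus ?thesis using key[OF _ True] True HU by auto
    next
      case False
      thus ?thesis using Z1_ext[OF c] by (simp add: extensional_def)
    qed
  qed
  have A1: "c' \<in> extensional U" by (simp add: c'_def)
  have A2: "\<forall>x\<in>U. 0 \<le> c' x \<and> c' x < p ^ 1"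
    using hsel crange by (simp add: c'_def)
  have A3: "\<forall>x\<in>U. \<forall>y\<in>U. c' (x \<otimes> y) = (c' x + \<theta> x 1 * c' y) mod p ^ 1"
  proof (intro ballI)
    fix x y assume xy: "x \<in> U" "y \<in> U"
    define h1 where "h1 = hsel x"
    define h2 where "h2 = hsel y"
    have h1: "h1 \<in> H" "inv h1 \<otimes> x \<in> N" using hsel[OF xy(1)] by (auto simp: h1_def)
    have h2: "h2 \<in> H" "inv h2 \<otimes> y \<in> N" using hsel[OF xy(2)] by (auto simp: h2_def)
    have xyc: "x \<in> carrier G" "y \<in> carrier G" using xy by (auto simp: U_def)
    have xyU: "x \<otimes> y \<in> U" using subgroup.m_closed[OF Usub xy] .
    have "inv (h1 \<otimes> h2) \<otimes> (x \<otimes> y) \<in> N"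
      by (rule Umult[OF xyc subsetD[OF Hc h1(1)] subsetD[OF Hc h2(1)] h1(2) h2(2)])
    moreover have h12: "h1 \<otimes> h2 \<in> H" by (rule subgroup.m_closed[OF H h1(1) h2(1)])
    ultimately have "c' (x \<otimes> y) = c (h1 \<otimes> h2)" by (intro key[OF xyU])
    also have "\<dots> = (c h1 + c h2) mod p" using chom[OF h1(1) h2(1)] .
    also have "c h1 = c' x" using key[OF xy(1) h1] by simp
    also have "c h2 = c' y" using key[OF xy(2) h2] by simp
    finally show "c' (x \<otimes> y) = (c' x + \<theta> x 1 * c' y) mod p ^ 1" using th1[OF xyc(1)] by simp
  qed
  have cont: "continuous_map (subtopology T U) (discrete_topology UNIV) c'"
    unfolding continuous_map_def
  proof (intro conjI allI impI)
    show "c' \<in> topspace (subtopology T U) \<rightarrow> topspace (discrete_topology UNIV)" by simp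
    fix S :: "int set"
    have "openin T {x \<in> topspace (subtopology T U). c' x \<in> S}"
    proof (subst openin_subopen, intro ballI)
      fix x assume x: "x \<in> {x \<in> topspace (subtopology T U). c' x \<in> S}"
      hence xU: "x \<in> U" and xS: "c' x \<in> S" by auto
      have xc: "x \<in> carrier G" using xU by (auto simp: U_def)
      define Q where "Q = {y \<in> carrier G. inv x \<otimes> y \<in> N}"
      have Qo: "openin T Q" unfolding Q_def using tg_lmult_open[OF tg _ N(2)] xc by simp
      have xQ: "x \<in> Q" unfolding Q_def using xc N1 by simp
      have QS: "Q \<subseteq> {x \<in> topspace (subtopology T U). c' x \<in> S}"
      proof
        fix y assume y: "y \<in> Q"
        have yc: "y \<in> carrier G" and yN: "inv x \<otimes> y \<in> N" using y by (auto simp: Q_def)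
        define h where "h = hsel x"
        have h: "h \<in> H" "inv h \<otimes> x \<in> N" using hsel[OF xU] by (auto simp: h_def)
        have hc: "h \<in> carrier G" by (rule subsetD[OF Hc h(1)])
        have "(inv h \<otimes> x) \<otimes> (inv x \<otimes> y) = inv h \<otimes> y"
          using hc xc yc by (simp add: m_assoc gcancel1)
        hence hy: "inv h \<otimes> y \<in> N" using Nm[OF h(2) yN] by simp
        hence yU: "y \<in> U" by (rule Uintro[OF yc h(1)])
        have "c' y = c h" using key[OF yU h(1) hy] .
        also have "\<dots> = c' x" using key[OF xU h] by simp
        finally have "c' y \<in> S" using xS by simp
        thus "y \<in> {x \<in> topspace (subtopology T U). c' x \<in> S}" using yU yc top by simp
      qed
      show "\<exists>T'. openin T T' \<and> x \<in> T' \<and> T' \<subseteq> {x \<in> topspace (subtopology T U). c' x \<in> S}"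
        using Qo xQ QS by blast
    qed
    moreover have "{x \<in> topspace (subtopology T U). c' x \<in> S} \<subseteq> U" by auto
    ultimately show "openin (subtopology T U) {x \<in> topspace (subtopology T U). c' x \<in> S}"
      using openin_open_subtopology[OF Uo] by blast
  qed
  have "c' \<in> Z1 p G T \<theta> U 1" unfolding Z1_def mem_Collect_eq
    by (intro conjI A1 A2 A3 cont)
  thus ?thesis using Usub Uo HU c'H by blast
qed


theorem mainTheorem10:
  fixes p :: int and G :: "('a, 'b) monoid_scheme" and T :: "'a topology"
    and \<theta> :: "'a \<Rightarrow> nat \<Rightarrow> int"
  assumes "prime p"
    and "profinite_group G T"
    and "orientation p G T \<theta>"
    and "\<And>U n. subgroup U G \<Longrightarrow> openin T U \<Longrightarrow> n \<ge> 1 \<Longrightarrow>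
           H1_reduction_surjective p G T \<theta> U n"
  shows "cyclotomic p G T \<theta>"
  unfolding cyclotomic_def
proof (intro allI impI)
  fix H and n :: nat assume Hn: "subgroup H G \<and> closedin T H \<and> n \<ge> 1"
  have H: "subgroup H G" and n: "n \<ge> 1" using Hn by auto
  have Hc: "H \<subseteq> carrier G" by (rule subgroup.subset[OF H])
  show "H1_reduction_surjective p G T \<theta> H n"
    unfolding H1_reduction_surjective_def H1_1[OF assms(1,3) Hc]
  proof
    show "H1_reduction p G T \<theta> H ` H1 p G T \<theta> H n \<subseteq> (\<lambda>c. {c}) ` Z1 p G T \<theta> H 1"
    proof
      fix D assume "D \<in> H1_reduction p G T \<theta> H ` H1 p G T \<theta> H n"
      then obtain C where C: "C \<in> H1 p G T \<theta> H n" and D: "D = H1_reduction p G T \<theta> H C" by blast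
      from C obtain x where x: "x \<in> Z1 p G T \<theta> H n" and Cx: "C = cohomologous p G T \<theta> H n `` {x}"
        unfolding H1_def quotient_def by blast
      have "D = {reduce_cocycle p H x}" using D Cx H1_red_class[OF assms(1,3) H n x] by simp
      moreover have "reduce_cocycle p H x \<in> Z1 p G T \<theta> H 1" by (rule reduce_Z1[OF assms(1,3) H n x])
      ultimately show "D \<in> (\<lambda>c. {c}) ` Z1 p G T \<theta> H 1" by blast
    qed
  next
    show "(\<lambda>c. {c}) ` Z1 p G T \<theta> H 1 \<subseteq> H1_reduction p G T \<theta> H ` H1 p G T \<theta> H n"
    proof
      fix D assume "D \<in> (\<lambda>c. {c}) ` Z1 p G T \<theta> H 1"
      then obtain c where c: "c \<in> Z1 p G T \<theta> H 1" and D: "D = {c}" by blast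
      obtain U c' where U: "subgroup U G" "openin T U" "H \<subseteq> U" and c': "c' \<in> Z1 p G T \<theta> U 1"
        and cc: "restrict c' H = c"
        using extend_hom[OF assms(1,2,3) H c] by blast
      have Uc: "U \<subseteq> carrier G" by (rule subgroup.subset[OF U(1)])
      have surjU: "H1_reduction p G T \<theta> U ` H1 p G T \<theta> U n = (\<lambda>c. {c}) ` Z1 p G T \<theta> U 1"
        using assms(4)[OF U(1,2) n] unfolding H1_reduction_surjective_def H1_1[OF assms(1,3) Uc] .
      have "{c'} \<in> (\<lambda>c. {c}) ` Z1 p G T \<theta> U 1" using c' by blast
      then obtain C where C: "C \<in> H1 p G T \<theta> U n" and Cc: "H1_reduction p G T \<theta> U C = {c'}"
        unfolding surjU[symmetric] by blast
      from C obtain x where x: "x \<in> Z1 p G T \<theta> U n" and Cx: "C = cohomologous p G T \<theta> U n `` {x}"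
        unfolding H1_def quotient_def by blast
      have "{reduce_cocycle p U x} = {c'}" using Cc Cx H1_red_class[OF assms(1,3) U(1) n x] by simp
      hence rx: "reduce_cocycle p U x = c'" by simp
      define d where "d = restrict x H"
      have d: "d \<in> Z1 p G T \<theta> H n" unfolding d_def by (rule restrict_Z1[OF H U(3) x])
      have rd: "reduce_cocycle p H d = c"
        unfolding d_def reduce_restrict[OF U(3)] rx cc ..
      have "cohomologous p G T \<theta> H n `` {d} \<in> H1 p G T \<theta> H n"
        unfolding H1_def quotient_def using d by blast
      moreover have "H1_reduction p G T \<theta> H (cohomologous p G T \<theta> H n `` {d}) = D"
        using H1_red_class[OF assms(1,3) H n d] rd D by simp
      ultimately show "D \<in> H1_reduction p G T \<theta> H ` H1 p G T \<theta> H n" by blast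
    qed
  qed
qed

end
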